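(* Given an $n$-qubit state $\lvert\psi\rangle$, let $\lvert\phi\rangle$ be a stabilizer state that maximizes the stabilizer fidelity, and let $S^* = \mathrm{Weyl}(\lvert\phi\rangle)$. Let $T \subseteq S^*$ be a subspace of $S^*$. Then \[ \sum_{x \in T} p_\psi(x) \geq \frac{\lvert T\rvert}{2^n} F_\mathcal{S}(\lvert\psi\rangle)^2. \]
   Context: For $x=(a,b)\in\mathbb F_2^{2n}$ the Weyl operator is $W_x = i^{a\cdot b}X^{a_1}Z^{b_1}\otimes\cdots\otimes X^{a_n}Z^{b_n}$; $p_\psi(x)=2^{-n}\langle\psi|W_x|\psi\rangle^2$; $\mathrm{Weyl}(\lvert\phi\rangle)=\{x\in\mathbb F_2^{2n}: W_x\lvert\phi\rangle=\pm\lvert\phi\rangle\}$ (a subspace of $\mathbb F_2^{2n}$); $F_\mathcal{S}(\lvert\psi\rangle)=\max_{\lvert\phi\rangle\text{ stabilizer}}\lvert\langle\phi|\psi\rangle\rvert^2$. *)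

theory Defs
  imports Complex_Main
begin

text \<open>Computational basis of n qubits: bit strings z with z i = False for i >= n.
  An n-qubit vector is a function from bit strings to complex amplitudes, vanishing
  outside the basis index set.\<close>

type_synonym bits = "nat \<Rightarrow> bool"
type_synonym qstate = "bits \<Rightarrow> complex"

definition bitstrs :: "nat \<Rightarrow> bits set" where
  "bitstrs n = {z. \<forall>i. n \<le> i \<longrightarrow> \<not> z i}"

definition bxor :: "bits \<Rightarrow> bits \<Rightarrow> bits" where
  "bxor a b = (\<lambda>i. a i \<noteq> b i)"

definition bdot :: "nat \<Rightarrow> bits \<Rightarrow> bits \<Rightarrow> nat" where
  "bdot n a b = card {i. i < n \<and> a i \<and> b i}"

definition F2 :: "nat \<Rightarrow> (bits \<times> bits) set" where
  "F2 n = bitstrs n \<times> bitstrs n"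

definition vxor :: "bits \<times> bits \<Rightarrow> bits \<times> bits \<Rightarrow> bits \<times> bits" where
  "vxor x y = (bxor (fst x) (fst y), bxor (snd x) (snd y))"

definition zero_bits :: bits where "zero_bits = (\<lambda>_. False)"

text \<open>Weyl operator W_(a,b) = i^(a.b) X^(a_1) Z^(b_1) (x) ... (x) X^(a_n) Z^(b_n):
  it maps |w> to i^(a.b) (-1)^(b.w) |w xor a>, hence
  (W psi)(z) = i^(a.b) (-1)^(b.(z xor a)) psi(z xor a).\<close>
definition weyl :: "nat \<Rightarrow> bits \<times> bits \<Rightarrow> qstate \<Rightarrow> qstate" where
  "weyl n x psi = (\<lambda>z. if z \<in> bitstrs n then
      \<i> ^ bdot n (fst x) (snd x) * (-1) ^ bdot n (snd x) (bxor z (fst x))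
        * psi (bxor z (fst x))
    else 0)"

definition qinner :: "nat \<Rightarrow> qstate \<Rightarrow> qstate \<Rightarrow> complex" where
  "qinner n phi psi = (\<Sum>z\<in>bitstrs n. cnj (phi z) * psi z)"

definition is_state :: "nat \<Rightarrow> qstate \<Rightarrow> bool" where
  "is_state n psi \<longleftrightarrow> (\<forall>z. z \<notin> bitstrs n \<longrightarrow> psi z = 0) \<and> qinner n psi psi = 1"

text \<open>p_psi(x) = 2^(-n) <psi|W_x|psi>^2 (the expectation value is real).\<close>
definition pdist :: "nat \<Rightarrow> qstate \<Rightarrow> bits \<times> bits \<Rightarrow> real" where
  "pdist n psi x = Re ((qinner n psi (weyl n x psi))\<^sup>2) / 2 ^ n"

definition Weyl :: "nat \<Rightarrow> qstate \<Rightarrow> (bits \<times> bits) set" where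
  "Weyl n phi = {x \<in> F2 n. weyl n x phi = phi \<or> weyl n x phi = (\<lambda>z. - phi z)}"

definition stabilizer_state :: "nat \<Rightarrow> qstate \<Rightarrow> bool" where
  "stabilizer_state n phi \<longleftrightarrow> is_state n phi \<and> card (Weyl n phi) = 2 ^ n"

definition stab_fidelity :: "nat \<Rightarrow> qstate \<Rightarrow> real" where
  "stab_fidelity n psi = (SUP phi\<in>{phi. stabilizer_state n phi}. (cmod (qinner n phi psi))\<^sup>2)"

definition F2_subspace :: "nat \<Rightarrow> (bits \<times> bits) set \<Rightarrow> bool" where
  "F2_subspace n T \<longleftrightarrow> T \<subseteq> F2 n \<and> (zero_bits, zero_bits) \<in> T
     \<and> (\<forall>x\<in>T. \<forall>y\<in>T. vxor x y \<in> T)"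

end

theory Submission imports Defs "HOL-Analysis.Analysis" begin

lemma bdot_Suc: "bdot (Suc n) a b = bdot n a b + (if a n \<and> b n then 1 else 0)"
proof -
  have "{i. i < Suc n \<and> a i \<and> b i} = {i. i < n \<and> a i \<and> b i} \<union> (if a n \<and> b n then {n} else {})"
    by (auto simp: less_Suc_eq)
  then show ?thesis unfolding bdot_def by (simp add: card_insert_if)
qed

lemma bdot_0[simp]: "bdot 0 a b = 0" by (simp add: bdot_def)

lemma bdot_sym: "bdot n a b = bdot n b a"
  unfolding bdot_def by (metis (mono_tags, lifting) Collect_cong)

lemma par1: "even (bdot n b u + bdot n b (bxor u a) + bdot n b a)"
  by (induction n) (auto simp: bdot_Suc bxor_def)

lemma par2: "even (bdot n (bxor b b') w + bdot n b w + bdot n b' w)"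
  by (induction n) (auto simp: bdot_Suc bxor_def)

lemma neg1_even: "even k \<Longrightarrow> (-1::complex) ^ k = 1"
  by simp

lemma sgn1: "(-1::complex) ^ bdot n b (bxor u a) = (-1) ^ bdot n b a * (-1) ^ bdot n b u"
proof -
  have "(-1::complex) ^ (bdot n b u + bdot n b (bxor u a) + bdot n b a) = 1"
    using par1 by simp
  then show ?thesis by (simp add: power_add minus_one_power_iff split: if_splits)
qed

lemma sgn2: "(-1::complex) ^ bdot n (bxor b b') w = (-1) ^ bdot n b w * (-1) ^ bdot n b' w"
proof -
  have "(-1::complex) ^ (bdot n (bxor b b') w + bdot n b w + bdot n b' w) = 1"
    using par2 by simp
  then show ?thesis by (simp add: power_add minus_one_power_iff split: if_splits)
qed


lemma bxor_bitstrs: "u \<in> bitstrs n \<Longrightarrow> a \<in> bitstrs n \<Longrightarrow> bxor u a \<in> bitstrs n"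
  by (auto simp: bitstrs_def bxor_def)

lemma bxor_bxor[simp]: "bxor (bxor u a) a = u"
  by (auto simp: bxor_def)

lemma bxor_assoc: "bxor (bxor u a) b = bxor u (bxor a b)"
  by (auto simp: bxor_def)

lemma vxor_vxor[simp]: "vxor x (vxor x y) = y"
  by (cases x; cases y) (auto simp: vxor_def bxor_def fun_eq_iff)

lemma mi_pow: "(- \<i>) ^ k = \<i> ^ k * (-1) ^ k"
proof -
  have "(- \<i>) ^ k = ((-1) * \<i>) ^ k" by simp
  also have "\<dots> = \<i> ^ k * (-1) ^ k" by (simp only: power_mult_distrib mult.commute)
  finally show ?thesis .
qed

lemma weyl_scale: "weyl n x (\<lambda>z. c * g z) = (\<lambda>z. c * weyl n x g z)"
  by (auto simp: weyl_def fun_eq_iff)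

lemma weyl_herm:
  assumes "x \<in> F2 n"
  shows "qinner n f (weyl n x g) = qinner n (weyl n x f) g"
proof -
  obtain a b where x: "x = (a,b)" by (cases x)
  have a: "a \<in> bitstrs n" using assms x by (auto simp: F2_def)
  let ?k = "bdot n a b"
  have bij: "bij_betw (\<lambda>u. bxor u a) (bitstrs n) (bitstrs n)"
    by (rule bij_betwI[where g="\<lambda>u. bxor u a"]) (auto simp: bxor_bitstrs a)
  have "qinner n (weyl n x f) g = (\<Sum>z\<in>bitstrs n. cnj (\<i> ^ ?k * (-1) ^ bdot n b (bxor z a) * f (bxor z a)) * g z)"
    by (simp add: qinner_def weyl_def x)
  also have "\<dots> = (\<Sum>u\<in>bitstrs n. cnj (\<i> ^ ?k * (-1) ^ bdot n b u * f u) * g (bxor u a))"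
    using sum.reindex_bij_betw[OF bij, of "\<lambda>u. cnj (\<i> ^ ?k * (-1) ^ bdot n b u * f u) * g (bxor u a)"]
    by simp
  also have "\<dots> = (\<Sum>u\<in>bitstrs n. cnj (f u) * (\<i> ^ ?k * (-1) ^ bdot n b (bxor u a) * g (bxor u a)))"
  proof (rule sum.cong[OF refl])
    fix u
    have e: "cnj (\<i> ^ ?k) = (-1) ^ ?k * \<i> ^ ?k"
      by (simp add: mi_pow)
    show "cnj (\<i> ^ ?k * (-1) ^ bdot n b u * f u) * g (bxor u a) =
          cnj (f u) * (\<i> ^ ?k * (-1) ^ bdot n b (bxor u a) * g (bxor u a))"
      by (simp add: e sgn1 bdot_sym[of n b a] mi_pow)
  qed
  also have "\<dots> = qinner n f (weyl n x g)"
    by (simp add: qinner_def weyl_def x)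
  finally show ?thesis ..
qed

lemma weyl_comp:
  assumes "x \<in> F2 n" "y \<in> F2 n"
  shows "\<exists>c. \<forall>g. weyl n x (weyl n y g) = (\<lambda>z. c * weyl n (vxor x y) g z)"
proof -
  obtain a b where x: "x = (a,b)" by (cases x)
  obtain a' b' where y: "y = (a',b')" by (cases y)
  have a: "a \<in> bitstrs n" "a' \<in> bitstrs n" using assms x y by (auto simp: F2_def)
  define m where "m = bdot n (bxor a a') (bxor b b')"
  define c where "c = \<i> ^ bdot n a b * \<i> ^ bdot n a' b' * (-1) ^ bdot n b a' / \<i> ^ m"
  have im: "\<i> ^ m \<noteq> 0" by simp
  show ?thesis
  proof (intro exI allI ext)
    fix g z
    show "weyl n x (weyl n y g) z = c * weyl n (vxor x y) g z"
    proof (cases "z \<in> bitstrs n")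
      case False then show ?thesis by (simp add: weyl_def)
    next
      case True
      let ?w = "bxor z (bxor a a')"
      have zb: "bxor z a \<in> bitstrs n" using True a bxor_bitstrs by blast
      have e1: "(-1::complex) ^ bdot n b (bxor z a) = (-1) ^ bdot n b a' * (-1) ^ bdot n b ?w"
        using sgn1[of n b ?w a'] by (simp add: bxor_assoc[symmetric] mult.commute)
      have e2: "(-1::complex) ^ bdot n (bxor b b') ?w = (-1) ^ bdot n b ?w * (-1) ^ bdot n b' ?w"
        by (rule sgn2)
      have "weyl n x (weyl n y g) z = \<i> ^ bdot n a b * (-1) ^ bdot n b (bxor z a) *
         (\<i> ^ bdot n a' b' * (-1) ^ bdot n b' ?w * g ?w)"
        using True zb by (simp add: weyl_def x y bxor_assoc)
      also have "\<dots> = c * (\<i> ^ m * (-1) ^ bdot n (bxor b b') ?w * g ?w)"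
        using im by (simp add: c_def e1 e2 field_simps)
      also have "\<dots> = c * weyl n (vxor x y) g z"
        using True by (simp add: weyl_def x y vxor_def m_def)
      finally show ?thesis .
    qed
  qed
qed


lemma qinner_sum_right: "qinner n f (\<lambda>z. \<Sum>x\<in>T. h x z) = (\<Sum>x\<in>T. qinner n f (h x))"
  unfolding qinner_def by (simp add: sum_distrib_left sum.swap[of _ T])

lemma qinner_sum_left: "qinner n (\<lambda>z. \<Sum>x\<in>T. h x z) g = (\<Sum>x\<in>T. qinner n (h x) g)"
  unfolding qinner_def by (simp add: sum_distrib_right sum.swap[of _ T])

lemma qinner_scale_right: "qinner n f (\<lambda>z. c * g z) = c * qinner n f g"
  unfolding qinner_def by (simp add: sum_distrib_left mult.left_commute)

lemma qinner_scale_left: "qinner n (\<lambda>z. c * f z) g = cnj c * qinner n f g"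
  unfolding qinner_def by (simp add: sum_distrib_left mult.assoc)

lemma qinner_cnj: "cnj (qinner n f g) = qinner n g f"
  unfolding qinner_def by (simp add: mult.commute)

lemma qinner_self: "qinner n f f = of_real (\<Sum>z\<in>bitstrs n. (cmod (f z))\<^sup>2)"
  unfolding qinner_def of_real_sum
  by (rule sum.cong[OF refl]) (simp add: complex_norm_square mult.commute del: of_real_power)

lemma qinner_CS: "(cmod (qinner n f g))\<^sup>2 \<le> Re (qinner n f f) * Re (qinner n g g)"
proof -
  have "cmod (qinner n f g) \<le> (\<Sum>z\<in>bitstrs n. cmod (f z) * cmod (g z))"
    unfolding qinner_def by (rule order.trans[OF norm_sum]) (simp add: norm_mult)
  moreover have "(\<Sum>z\<in>bitstrs n. cmod (f z) * cmod (g z))\<^sup>2 \<le>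
      (\<Sum>z\<in>bitstrs n. (cmod (f z))\<^sup>2) * (\<Sum>z\<in>bitstrs n. (cmod (g z))\<^sup>2)"
    by (rule Cauchy_Schwarz_ineq_sum)
  ultimately have "(cmod (qinner n f g))\<^sup>2 \<le>
      (\<Sum>z\<in>bitstrs n. (cmod (f z))\<^sup>2) * (\<Sum>z\<in>bitstrs n. (cmod (g z))\<^sup>2)"
    by (meson norm_ge_zero order_trans power_mono)
  then show ?thesis by (simp only: qinner_self Re_complex_of_real)
qed


theorem corollary5p3:
  fixes n :: nat and psi phi :: qstate and T :: "(bits \<times> bits) set"
  assumes "is_state n psi"
    and "stabilizer_state n phi"
    and "\<forall>phi'. stabilizer_state n phi' \<longrightarrow>
           (cmod (qinner n phi' psi))\<^sup>2 \<le> (cmod (qinner n phi psi))\<^sup>2"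
    and "F2_subspace n T"
    and "T \<subseteq> Weyl n phi"
  shows "(\<Sum>x\<in>T. pdist n psi x) \<ge> real (card T) / 2 ^ n * (stab_fidelity n psi)\<^sup>2"
proof -
  note st = assms(2)[unfolded stabilizer_state_def]
  have phiphi: "qinner n phi phi = 1" using st is_state_def by blast
  have finW: "finite (Weyl n phi)" using st by (metis card.infinite power_not_zero zero_neq_numeral)
  have finT: "finite T" using finW assms(5) finite_subset by blast
  have TF: "T \<subseteq> F2 n" using assms(5) by (auto simp: Weyl_def)
  have T0: "T \<noteq> {}" using assms(4) by (auto simp: F2_subspace_def)
  have Tclos: "\<And>x y. x \<in> T \<Longrightarrow> y \<in> T \<Longrightarrow> vxor x y \<in> T" using assms(4) by (auto simp: F2_subspace_def)
  define F where "F = (cmod (qinner n phi psi))\<^sup>2"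
  have fid: "stab_fidelity n psi = F"
    unfolding stab_fidelity_def F_def
    by (rule cSup_eq_maximum) (use assms(2,3) in auto)
  obtain z0 where z0: "phi z0 \<noteq> 0"
  proof -
    have "\<not> (\<forall>z. phi z = 0)"
    proof
      assume "\<forall>z. phi z = 0"
      then have "qinner n phi phi = 0" by (simp add: qinner_def)
      then show False using phiphi by simp
    qed
    then show ?thesis using that by blast
  qed
  define s where "s x = (if weyl n x phi = phi then 1 else (-1::complex))" for x
  have hs: "weyl n x phi = (\<lambda>z. s x * phi z)" if "x \<in> T" for x
    using that assms(5) by (auto simp: Weyl_def s_def)
  have s_cases: "s x = 1 \<or> s x = -1" for x by (simp add: s_def)
  have s_cnj: "cnj (s x) = s x" for x by (simp add: s_def)
  have s_sq: "s x * s x = 1" for x by (simp add: s_def)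
  define U where "U x g = (\<lambda>z. s x * weyl n x g z)" for x g
  have U_herm: "qinner n f (U x g) = qinner n (U x f) g" if "x \<in> T" for x f g
    using that TF weyl_herm[of x n f g]
    by (auto simp: U_def qinner_scale_left qinner_scale_right s_cnj)
  have U_phi: "U x phi = phi" if "x \<in> T" for x
    using hs[OF that] by (simp add: U_def weyl_scale mult.assoc[symmetric] s_sq)
  have U_comp: "U x (U y g) = U (vxor x y) g" if hxy: "x \<in> T" "y \<in> T" for x y g
  proof -
    obtain c where c: "\<And>h. weyl n x (weyl n y h) = (\<lambda>z. c * weyl n (vxor x y) h z)"
      using weyl_comp[of x n y] hxy TF by blast
    have gen: "U x (U y h) = (\<lambda>z. s x * s y * c * weyl n (vxor x y) h z)" for h
      by (simp add: U_def weyl_scale c mult.assoc)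
    have "phi = (\<lambda>z. s x * s y * c * s (vxor x y) * phi z)"
      using gen[of phi] U_phi[OF hxy(1)] U_phi[OF hxy(2)] hs[OF Tclos[OF hxy]]
      by (simp add: mult.assoc)
    then have "phi z0 = s x * s y * c * s (vxor x y) * phi z0" by metis
    then have "s x * s y * c * s (vxor x y) = 1" using z0 by simp
    then have "s x * s y * c * s (vxor x y) * s (vxor x y) = s (vxor x y)" by simp
    then have "s x * s y * c = s (vxor x y)" by (simp add: mult.assoc s_sq)
    then show ?thesis unfolding gen by (simp add: U_def)
  qed
  define cc where "cc x = qinner n psi (weyl n x psi)" for x
  have cc_real: "Im (cc x) = 0" if "x \<in> T" for x
  proof -
    have "cnj (cc x) = cc x" unfolding cc_def qinner_cnj
      using weyl_herm[of x n psi psi] that TF by auto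
    then show ?thesis by (metis Reals_cnj_iff complex_is_Real_iff)
  qed
  define r where "r x = Re (qinner n psi (U x psi))" for x
  have r_sq: "(r x)\<^sup>2 = Re ((cc x)\<^sup>2)" if "x \<in> T" for x
    using s_cases[of x] cc_real[OF that]
    by (auto simp: r_def U_def qinner_scale_right cc_def[symmetric] power2_eq_square)
  define v where "v = (\<lambda>z. \<Sum>x\<in>T. U x psi z)"
  have reidx: "(\<Sum>y\<in>T. h (vxor x y)) = (\<Sum>y\<in>T. h y)" if "x \<in> T" for x and h :: "_ \<Rightarrow> complex"
  proof -
    have "bij_betw (vxor x) T T"
      by (rule bij_betwI[where g="vxor x"]) (auto simp: Tclos that)
    then show ?thesis by (rule sum.reindex_bij_betw)
  qed
  have vv: "qinner n v v = of_nat (card T) * (\<Sum>x\<in>T. qinner n psi (U x psi))"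
  proof -
    have "qinner n v v = (\<Sum>x\<in>T. \<Sum>y\<in>T. qinner n (U x psi) (U y psi))"
      unfolding v_def qinner_sum_left qinner_sum_right ..
    also have "\<dots> = (\<Sum>x\<in>T. \<Sum>y\<in>T. qinner n psi (U (vxor x y) psi))"
      by (rule sum.cong[OF refl], rule sum.cong[OF refl]) (simp add: U_herm[symmetric] U_comp)
    also have "\<dots> = (\<Sum>x\<in>T. \<Sum>y\<in>T. qinner n psi (U y psi))"
      by (rule sum.cong[OF refl]) (rule reidx)
    also have "\<dots> = of_nat (card T) * (\<Sum>x\<in>T. qinner n psi (U x psi))" by simp
    finally show ?thesis .
  qed
  have phiv: "qinner n phi v = of_nat (card T) * qinner n phi psi"
  proof -
    have "qinner n phi v = (\<Sum>x\<in>T. qinner n phi (U x psi))"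
      unfolding v_def qinner_sum_right ..
    also have "\<dots> = (\<Sum>x\<in>T. qinner n phi psi)"
      by (rule sum.cong[OF refl]) (simp add: U_herm U_phi)
    finally show ?thesis by simp
  qed
  have cs: "(cmod (qinner n phi v))\<^sup>2 \<le> Re (qinner n v v)"
    using qinner_CS[of n phi v] phiphi by simp
  have ct: "real (card T) > 0" using finT T0 by (simp add: card_gt_0_iff)
  have "(real (card T))\<^sup>2 * F \<le> real (card T) * (\<Sum>x\<in>T. r x)"
    using cs unfolding phiv vv F_def r_def
    by (simp add: norm_mult power_mult_distrib)
  then have A: "real (card T) * F \<le> (\<Sum>x\<in>T. r x)"
    using ct by (simp add: power2_eq_square mult.assoc)
  have F0: "F \<ge> 0" by (simp add: F_def)
  have "(real (card T) * F)\<^sup>2 \<le> (\<Sum>x\<in>T. r x)\<^sup>2"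
    using A F0 ct by (intro power_mono) auto
  also have "\<dots> \<le> (\<Sum>x\<in>T. (r x)\<^sup>2) * real (card T)"
    by (rule sum_squared_le_sum_of_squares)
  finally have "real (card T) * F\<^sup>2 \<le> (\<Sum>x\<in>T. (r x)\<^sup>2)"
    using ct by (simp add: power2_eq_square mult.assoc mult.left_commute)
  also have "\<dots> = (\<Sum>x\<in>T. Re ((cc x)\<^sup>2))"
    by (rule sum.cong[OF refl]) (rule r_sq)
  finally have B: "real (card T) * F\<^sup>2 \<le> (\<Sum>x\<in>T. Re ((cc x)\<^sup>2))" .
  have "(\<Sum>x\<in>T. pdist n psi x) = (\<Sum>x\<in>T. Re ((cc x)\<^sup>2)) / 2 ^ n"
    by (simp add: pdist_def cc_def sum_divide_distrib)
  then show ?thesis using B by (simp add: fid divide_right_mono)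
qed

end
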